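(* Let $G=(V,E)$ be a finite graph with nonnegative edge weights $w\in\mathbb{R}^E$, and let $W\in\mathcal S^V$ be the symmetric matrix with $W_{xy}=w_{xy}$ for $\{x,y\}\in E$ and $W_{xy}=M$ for distinct $x,y$ with $\{x,y\}\notin E$, where $M$ is a positive number larger than all edge weights. Then every perfect elimination ordering of the matrix $-W$ is a distance-preserving elimination ordering of $(G,w)$.
   Context: A perfect elimination ordering of a symmetric matrix $A$ indexed by $V$ is a linear order $\pi$ of $V$ with $A_{yz}\ge\min\{A_{xy},A_{xz}\}$ for all $x<_\pi y<_\pi z$; for $A=-W$ this reads $W_{yz}\le\max\{W_{xy},W_{xz}\}$. $d_{(H,w)}$ denotes the shortest path metric of a weighted graph $(H,w)$. A linear order $v_1,\dots,v_n$ of $V$ is a distance-preserving elimination ordering of $(G,w)$ if for each $i\in[n]$ the induced weighted subgraph $G_i=G[\{v_i,\dots,v_n\}]$ with weights $w$ satisfies: $d_{(G_i,w)}$ coincides with the restriction of $d_{(G,w)}$ to $\{v_i,\dots,v_n\}$. *)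

theory Defs
  imports Complex_Main "HOL-Library.Extended_Real"
begin

definition simple_graph :: "'a set \<Rightarrow> 'a set set \<Rightarrow> bool" where
  "simple_graph V E \<longleftrightarrow> finite V \<and> (\<forall>e\<in>E. e \<subseteq> V \<and> card e = 2)"

definition is_walk :: "'a set set \<Rightarrow> 'a set \<Rightarrow> 'a list \<Rightarrow> 'a \<Rightarrow> 'a \<Rightarrow> bool" where
  "is_walk E S xs x y \<longleftrightarrow> xs \<noteq> [] \<and> hd xs = x \<and> last xs = y \<and> set xs \<subseteq> S \<and>
     (\<forall>(a,b)\<in>set (zip xs (tl xs)). {a,b} \<in> E)"

definition walk_weight :: "('a set \<Rightarrow> real) \<Rightarrow> 'a list \<Rightarrow> real" where
  "walk_weight w xs = (\<Sum>(a,b)\<leftarrow>zip xs (tl xs). w {a,b})"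

text \<open>Shortest path metric of the induced weighted subgraph G[S] (infinite if no walk exists).\<close>
definition sp_dist :: "'a set set \<Rightarrow> ('a set \<Rightarrow> real) \<Rightarrow> 'a set \<Rightarrow> 'a \<Rightarrow> 'a \<Rightarrow> ereal" where
  "sp_dist E w S x y = Inf {ereal (walk_weight w xs) | xs. is_walk E S xs x y}"

definition perfect_elim_ordering :: "'a set \<Rightarrow> ('a \<Rightarrow> 'a \<Rightarrow> real) \<Rightarrow> 'a list \<Rightarrow> bool" where
  "perfect_elim_ordering V A vs \<longleftrightarrow> distinct vs \<and> set vs = V \<and>
     (\<forall>i j k. i < j \<and> j < k \<and> k < length vs \<longrightarrow>
        A (vs!j) (vs!k) \<ge> min (A (vs!i) (vs!j)) (A (vs!i) (vs!k)))"

definition dist_pres_elim_ordering :: "'a set \<Rightarrow> 'a set set \<Rightarrow> ('a set \<Rightarrow> real) \<Rightarrow> 'a list \<Rightarrow> bool" where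
  "dist_pres_elim_ordering V E w vs \<longleftrightarrow> distinct vs \<and> set vs = V \<and>
     (\<forall>i < length vs. \<forall>x\<in>set (drop i vs). \<forall>y\<in>set (drop i vs).
        sp_dist E w (set (drop i vs)) x y = sp_dist E w V x y)"

text \<open>The matrix W: edge weight on edges, M on non-adjacent distinct pairs (diagonal 0, irrelevant).\<close>
definition weight_matrix :: "'a set set \<Rightarrow> ('a set \<Rightarrow> real) \<Rightarrow> real \<Rightarrow> 'a \<Rightarrow> 'a \<Rightarrow> real" where
  "weight_matrix E w M x y = (if x = y then 0 else if {x,y} \<in> E then w {x,y} else M)"

end

theory Submission
  imports Defs
begin

lemma is_walk_Cons:
  "is_walk E S (p # r) x y \<longleftrightarrow> p = x \<and> p \<in> S \<and>
     (if r = [] then y = p else {p, hd r} \<in> E \<and> is_walk E S r (hd r) y)"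
  by (cases r) (auto simp: is_walk_def)

lemma walk_weight_Cons:
  "walk_weight w (p # r) = (if r = [] then 0 else w {p, hd r} + walk_weight w r)"
  by (cases r) (auto simp: walk_weight_def)

lemma walk_weight_nonneg:
  assumes "\<forall>e\<in>E. 0 \<le> w e"
  shows "is_walk E S xs x y \<Longrightarrow> 0 \<le> walk_weight w xs"
proof (induction xs arbitrary: x)
  case Nil then show ?case by (simp add: is_walk_def)
next
  case (Cons p r)
  then show ?case using assms by (auto simp: is_walk_Cons walk_weight_Cons split: if_splits)
qed

lemma set_drop_conv: "set (drop n xs) = {xs ! i |i. n \<le> i \<and> i < length xs}"
proof (rule set_eqI)
  fix u
  show "u \<in> set (drop n xs) \<longleftrightarrow> u \<in> {xs ! i |i. n \<le> i \<and> i < length xs}"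
    unfolding in_set_conv_nth
    by (auto simp: nth_drop) (metis add.commute le_add_diff_inverse less_diff_conv)
qed

lemma walk_edge:
  "is_walk E S (ps @ a # b # qs) x y \<Longrightarrow> {a,b} \<in> E"
proof (induction ps arbitrary: x)
  case Nil then show ?case by (auto simp: is_walk_Cons)
next
  case (Cons p r)
  then show ?case by (cases r) (auto simp: is_walk_Cons split: if_splits)
qed

lemma surgery:
  assumes "is_walk E S (ps @ a # v # b # qs) x y" "\<forall>e\<in>E. 0 \<le> w e"
    "a \<noteq> b \<Longrightarrow> {a,b} \<in> E \<and> w {a,b} \<le> w {a,v} + w {v,b}"
  shows "is_walk E S (ps @ (if a = b then a # qs else a # b # qs)) x y \<and>
    walk_weight w (ps @ (if a = b then a # qs else a # b # qs)) \<le> walk_weight w (ps @ a # v # b # qs)"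
  using assms(1)
proof (induction ps arbitrary: x)
  case Nil
  have nn: "0 \<le> walk_weight w (b # qs)"
    using Nil walk_weight_nonneg[OF assms(2)] by (auto simp: is_walk_Cons)
  have "0 \<le> w {a,v}" "0 \<le> w {v,b}" using Nil assms(2) by (auto simp: is_walk_Cons)
  then show ?case using Nil assms(3) nn
    by (auto simp: is_walk_Cons walk_weight_Cons split: if_splits)
next
  case (Cons p r)
  have h: "hd (r @ (if a = b then a # qs else a # b # qs)) = hd (r @ a # v # b # qs)"
    by (cases r) auto
  from Cons.prems have "{p, hd (r @ a # v # b # qs)} \<in> E"
    "is_walk E S (r @ a # v # b # qs) (hd (r @ a # v # b # qs)) y" "p = x" "p \<in> S"
    by (auto simp: is_walk_Cons)
  with Cons.IH[of "hd (r @ a # v # b # qs)"] h show ?case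
    by (auto simp: is_walk_Cons walk_weight_Cons)
qed

lemma W_sym: "weight_matrix E w M x y = weight_matrix E w M y x"
  by (auto simp: weight_matrix_def insert_commute)

theorem proposition1:
  fixes V :: "'a set" and E :: "'a set set" and w :: "'a set \<Rightarrow> real" and M :: real
    and vs :: "'a list"
  assumes "simple_graph V E"
    and "\<forall>e\<in>E. 0 \<le> w e"
    and "0 < M" and "\<forall>e\<in>E. w e < M"
    and "perfect_elim_ordering V (\<lambda>x y. - weight_matrix E w M x y) vs"
  shows "dist_pres_elim_ordering V E w vs"
proof -
  note peo = assms(5)[unfolded perfect_elim_ordering_def]
  have dist: "distinct vs" and setvs: "set vs = V" using peo by auto
  have card2: "\<And>e. e \<in> E \<Longrightarrow> card e = 2" using assms(1) by (auto simp: simple_graph_def)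
  have neq: "\<And>a b. {a,b} \<in> E \<Longrightarrow> a \<noteq> b" using card2 by fastforce
  let ?W = "weight_matrix E w M"
  have peo3: "\<And>i j k. i < j \<Longrightarrow> j < k \<Longrightarrow> k < length vs \<Longrightarrow>
      ?W (vs!j) (vs!k) \<le> max (?W (vs!i) (vs!j)) (?W (vs!i) (vs!k))"
    using peo by force
  have reduce: "\<And>xs x y. is_walk E V xs x y \<Longrightarrow> x \<in> set (drop i vs) \<Longrightarrow> y \<in> set (drop i vs) \<Longrightarrow>
      \<exists>ys. is_walk E (set (drop i vs)) ys x y \<and> walk_weight w ys \<le> walk_weight w xs" for i
  proof -
    let ?T = "set (drop i vs)"
    fix xs x y
    show "is_walk E V xs x y \<Longrightarrow> x \<in> ?T \<Longrightarrow> y \<in> ?T \<Longrightarrow>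
      \<exists>ys. is_walk E ?T ys x y \<and> walk_weight w ys \<le> walk_weight w xs"
    proof (induction "length xs" arbitrary: xs rule: less_induct)
      case less
      show ?case
      proof (cases "set xs \<subseteq> ?T")
        case True
        then show ?thesis using less.prems by (auto simp: is_walk_def)
      next
        case False
        then obtain u where u: "u \<in> set xs" "u \<notin> ?T" by auto
        have sxV: "set xs \<subseteq> V" using less.prems by (auto simp: is_walk_def)
        then obtain ku where ku: "ku < length vs" "vs ! ku = u" using u setvs
          by (metis in_set_conv_nth subsetD)
        have kui: "ku < i" using ku u by (metis (mono_tags, lifting) mem_Collect_eq not_less set_drop_conv)
        define J where "J = {k. k < length vs \<and> vs ! k \<in> set xs}"
        have fJ: "finite J" unfolding J_def by auto
        have kuJ: "ku \<in> J" using ku u unfolding J_def by auto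
        define j0 where "j0 = Min J"
        have j0J: "j0 \<in> J" using fJ kuJ unfolding j0_def using Min_in by blast
        have j0min: "\<And>k. k < length vs \<Longrightarrow> vs ! k \<in> set xs \<Longrightarrow> j0 \<le> k"
          using fJ unfolding j0_def J_def by auto
        have j0i: "j0 < i" using Min_le[OF fJ kuJ] kui unfolding j0_def by auto
        define v where "v = vs ! j0"
        have vxs: "v \<in> set xs" and j0l: "j0 < length vs" using j0J unfolding J_def v_def by auto
        have vT: "v \<notin> ?T"
        proof
          assume "v \<in> ?T"
          then obtain k where "i \<le> k" "k < length vs" "vs ! k = v" by (auto simp: set_drop_conv)
          then show False using dist j0l j0i nth_eq_iff_index_eq unfolding v_def by fastforce
        qed
        have vx: "v \<noteq> x" and vy: "v \<noteq> y" using vT less.prems by auto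
        obtain ps rs where xs: "xs = ps @ v # rs" using vxs by (meson split_list)
        have "ps \<noteq> []" using xs vx less.prems(1) by (auto simp: is_walk_def)
        then obtain ps0 a where ps: "ps = ps0 @ [a]" by (metis rev_exhaust)
        have "rs \<noteq> []" using xs vy less.prems(1) by (auto simp: is_walk_def)
        then obtain b qs where rs: "rs = b # qs" by (metis list.exhaust)
        have xs2: "xs = ps0 @ a # v # b # qs" using xs ps rs by simp
        have eav: "{a,v} \<in> E" using walk_edge[of E V ps0 a v "b # qs" x y] less.prems(1) xs2 by simp
        have evb: "{v,b} \<in> E" using walk_edge[of E V "ps0 @ [a]" v b qs x y] less.prems(1) xs2 by simp
        have av: "a \<noteq> v" and vb: "v \<noteq> b" using neq eav evb by auto
        have aV: "a \<in> set xs" "b \<in> set xs" using xs2 by auto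
        then obtain ka kb where ka: "ka < length vs" "vs ! ka = a" and kb: "kb < length vs" "vs ! kb = b"
          using sxV setvs by (metis in_set_conv_nth subsetD)
        have kaj: "j0 < ka" using j0min[OF ka(1)] ka aV av unfolding v_def by (metis le_neq_implies_less)
        have kbj: "j0 < kb" using j0min[OF kb(1)] kb aV vb unfolding v_def by (metis le_neq_implies_less)
        have Wva: "?W v a = w {a,v}" using eav av by (auto simp: weight_matrix_def insert_commute)
        have Wvb: "?W v b = w {v,b}" using evb vb by (auto simp: weight_matrix_def)
        have cond: "a \<noteq> b \<Longrightarrow> {a,b} \<in> E \<and> w {a,b} \<le> w {a,v} + w {v,b}"
        proof -
          assume ab: "a \<noteq> b"
          have "ka \<noteq> kb" using ab ka kb by auto
          then have "?W a b \<le> max (?W v a) (?W v b)"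
          proof (cases "ka < kb")
            case True
            then show ?thesis using peo3[OF kaj True kb(1)] ka kb unfolding v_def by simp
          next
            case False
            then have kk: "kb < ka" using \<open>ka \<noteq> kb\<close> by simp
            then show ?thesis using peo3[OF kbj kk ka(1)] ka kb W_sym[of E w M a b] unfolding v_def
              by (simp add: max.commute)
          qed
          then have le: "?W a b \<le> max (w {a,v}) (w {v,b})" using Wva Wvb by simp
          have "w {a,v} < M" "w {v,b} < M" using assms(4) eav evb by auto
          then have abE: "{a,b} \<in> E" using le ab by (auto simp: weight_matrix_def split: if_splits)
          have "0 \<le> w {a,v}" "0 \<le> w {v,b}" using assms(2) eav evb by auto
          then show ?thesis using abE le ab by (auto simp: weight_matrix_def)
        qed
        let ?ys = "ps0 @ (if a = b then a # qs else a # b # qs)"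
        have sg: "is_walk E V ?ys x y" "walk_weight w ?ys \<le> walk_weight w xs"
          using surgery[of E V ps0 a v b qs x y w, OF _ assms(2) cond] less.prems(1) xs2 by auto
        have "length ?ys < length xs" using xs2 by auto
        from less.hyps[OF this sg(1) less.prems(2,3)] sg(2) show ?thesis by force
      qed
    qed
  qed
  show ?thesis unfolding dist_pres_elim_ordering_def
  proof (intro conjI dist setvs allI impI ballI)
    fix i x y
    assume x: "x \<in> set (drop i vs)" and y: "y \<in> set (drop i vs)"
    let ?T = "set (drop i vs)"
    have TV: "?T \<subseteq> V" using setvs by (metis set_drop_subset)
    show "sp_dist E w ?T x y = sp_dist E w V x y"
    proof (rule antisym)
      show "sp_dist E w ?T x y \<le> sp_dist E w V x y"
        unfolding sp_dist_def
      proof (rule Inf_greatest)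
        fix z assume "z \<in> {ereal (walk_weight w xs) |xs. is_walk E V xs x y}"
        then obtain xs where z: "z = ereal (walk_weight w xs)" "is_walk E V xs x y" by auto
        obtain ys where ys: "is_walk E ?T ys x y" "walk_weight w ys \<le> walk_weight w xs"
          using reduce[OF z(2) x y] by auto
        have "Inf {ereal (walk_weight w xs) |xs. is_walk E ?T xs x y} \<le> ereal (walk_weight w ys)"
          using ys(1) by (intro Inf_lower) auto
        also have "\<dots> \<le> z" using ys(2) z(1) by simp
        finally show "Inf {ereal (walk_weight w xs) |xs. is_walk E ?T xs x y} \<le> z" .
      qed
      show "sp_dist E w V x y \<le> sp_dist E w ?T x y"
        unfolding sp_dist_def
        by (rule Inf_superset_mono) (use TV in \<open>auto simp: is_walk_def\<close>)
    qed
  qed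
qed

end
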